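(* Let $m_1,m_2,m_3,m_4>0$, $M=\sum m_i$, $I(\mathbf{r})=\frac{1}{2M}\sum_{i<j}m_im_jr_{ij}^2$ and $P(\mathbf{r})=r_{12}r_{34}+r_{14}r_{23}-r_{13}r_{24}$ for $\mathbf{r}=(r_{12},r_{13},r_{14},r_{23},r_{24},r_{34})\in\mathbb{R}^6$. Then the set $\mathcal{M}=\{\mathbf{r}\in\mathbb{R}^6: I(\mathbf{r})=1,\ P(\mathbf{r})=0\}$ is diffeomorphic to the oriented Grassmannian $\mathrm{Gr}_+(2,4)=SO(4)/(SO(2)\times SO(2))$ of oriented 2-planes in $\mathbb{R}^4$, and to $S^2\times S^2$. *)

theory Defs
  imports "HOL-Analysis.Analysis"
begin

text \<open>Taken coinductively (greatest fixed point), this is exactly infinite differentiability.\<close>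
coinductive smooth_on :: "'a::euclidean_space set \<Rightarrow> ('a \<Rightarrow> 'b::euclidean_space) \<Rightarrow> bool"
  for U :: "'a set" where
  "f differentiable_on U \<Longrightarrow>
   (\<And>i. i \<in> Basis \<Longrightarrow> smooth_on U (\<lambda>x. frechet_derivative f (at x) i)) \<Longrightarrow>
   smooth_on U f"

text \<open>Smooth maps on arbitrary subsets of Euclidean space (Milnor): locally the
  restriction of a C-infinity map defined on an open neighbourhood.\<close>
definition smooth_map :: "'a::euclidean_space set \<Rightarrow> ('a \<Rightarrow> 'b::euclidean_space) \<Rightarrow> bool" where
  "smooth_map X f \<longleftrightarrow>
     (\<forall>x\<in>X. \<exists>U F. open U \<and> x \<in> U \<and> smooth_on U F \<and> (\<forall>y\<in>U \<inter> X. F y = f y))"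

definition diffeomorphic_sets :: "'a::euclidean_space set \<Rightarrow> 'b::euclidean_space set \<Rightarrow> bool" where
  "diffeomorphic_sets X Y \<longleftrightarrow>
     (\<exists>f g. f ` X \<subseteq> Y \<and> g ` Y \<subseteq> X \<and> (\<forall>x\<in>X. g (f x) = x) \<and> (\<forall>y\<in>Y. f (g y) = y)
            \<and> smooth_map X f \<and> smooth_map Y g)"

text \<open>Coordinates of r in R^6: r$1 = r12, r$2 = r13, r$3 = r14, r$4 = r23, r$5 = r24, r$6 = r34.\<close>
definition moment_I :: "real \<Rightarrow> real \<Rightarrow> real \<Rightarrow> real \<Rightarrow> real^6 \<Rightarrow> real" where
  "moment_I m1 m2 m3 m4 r =
     (1 / (2 * (m1 + m2 + m3 + m4))) *
       (m1*m2 * (r$1)^2 + m1*m3 * (r$2)^2 + m1*m4 * (r$3)^2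
        + m2*m3 * (r$4)^2 + m2*m4 * (r$5)^2 + m3*m4 * (r$6)^2)"

definition ptolemy_P :: "real^6 \<Rightarrow> real" where
  "ptolemy_P r = (r$1) * (r$6) + (r$3) * (r$4) - (r$2) * (r$5)"

definition shape_M :: "real \<Rightarrow> real \<Rightarrow> real \<Rightarrow> real \<Rightarrow> (real^6) set" where
  "shape_M m1 m2 m3 m4 = {r. moment_I m1 m2 m3 m4 r = 1 \<and> ptolemy_P r = 0}"

text \<open>Pluecker coordinates u \<and> v of a pair of vectors in R^4 (basis e_ij, i<j, lexicographic).\<close>
definition pluecker :: "real^4 \<Rightarrow> real^4 \<Rightarrow> real^6" where
  "pluecker u v = vector
     [u$1 * v$2 - u$2 * v$1, u$1 * v$3 - u$3 * v$1, u$1 * v$4 - u$4 * v$1,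
      u$2 * v$3 - u$3 * v$2, u$2 * v$4 - u$4 * v$2, u$3 * v$4 - u$4 * v$3]"

text \<open>Oriented Grassmannian Gr+(2,4), embedded in \<Lambda>^2 R^4 = R^6 via the Pluecker map:
  an oriented plane with oriented orthonormal basis (u,v) corresponds to u \<and> v.\<close>
definition oriented_grassmannian_2_4 :: "(real^6) set" where
  "oriented_grassmannian_2_4 =
     {pluecker u v | u v. norm u = 1 \<and> norm v = 1 \<and> inner u v = 0}"

definition sphere2_times_sphere2 :: "((real^3) \<times> (real^3)) set" where
  "sphere2_times_sphere2 = sphere 0 1 \<times> sphere 0 1"

end

theory Submission
  imports Defs
begin
lemma exhaust_6:
  fixes x :: 6
  shows "x = 1 \<or> x = 2 \<or> x = 3 \<or> x = 4 \<or> x = 5 \<or> x = 6"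
proof (induct x)
  case (of_int z)
  then have "0 \<le> z" "z < 6" by simp_all
  then have "z = 0 \<or> z = 1 \<or> z = 2 \<or> z = 3 \<or> z = 4 \<or> z = 5" by presburger
  then show ?case by auto
qed
lemma UNIV_6: "UNIV = {1, 2, 3, 4, 5, 6::6}"
  using exhaust_6 by auto
lemma sum_6: "sum f (UNIV::6 set) = f 1 + f 2 + f 3 + f 4 + f 5 + f 6"
  unfolding UNIV_6 by (simp add: ac_simps)
lemma forall_6: "(\<forall>i::6. P i) \<longleftrightarrow> P 1 \<and> P 2 \<and> P 3 \<and> P 4 \<and> P 5 \<and> P 6"
proof
  assume h: "P 1 \<and> P 2 \<and> P 3 \<and> P 4 \<and> P 5 \<and> P 6"
  show "\<forall>i::6. P i"
  proof
    fix i :: 6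
    from exhaust_6[of i] h show "P i" by (elim disjE) simp_all
  qed
qed simp
lemma vec6_eq: "(x::'a^6) = y \<longleftrightarrow> x$1=y$1 \<and> x$2=y$2 \<and> x$3=y$3 \<and> x$4=y$4 \<and> x$5=y$5 \<and> x$6=y$6"
  unfolding vec_eq_iff forall_6 ..
lemma vec4_eq: "(x::'a^4) = y \<longleftrightarrow> x$1=y$1 \<and> x$2=y$2 \<and> x$3=y$3 \<and> x$4=y$4"
  unfolding vec_eq_iff forall_4 ..
lemma vec3_eq: "(x::'a^3) = y \<longleftrightarrow> x$1=y$1 \<and> x$2=y$2 \<and> x$3=y$3"
  unfolding vec_eq_iff forall_3 ..
lemma vector_6 [simp]:
 "(vector [a,b,c,d,e,f] ::('a::zero)^6)$1 = a"
 "(vector [a,b,c,d,e,f] ::('a::zero)^6)$2 = b"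
 "(vector [a,b,c,d,e,f] ::('a::zero)^6)$3 = c"
 "(vector [a,b,c,d,e,f] ::('a::zero)^6)$4 = d"
 "(vector [a,b,c,d,e,f] ::('a::zero)^6)$5 = e"
 "(vector [a,b,c,d,e,f] ::('a::zero)^6)$6 = f"
  unfolding vector_def by simp_all
lemma vector_4 [simp]:
 "(vector [a,b,c,d] ::('a::zero)^4)$1 = a"
 "(vector [a,b,c,d] ::('a::zero)^4)$2 = b"
 "(vector [a,b,c,d] ::('a::zero)^4)$3 = c"
 "(vector [a,b,c,d] ::('a::zero)^4)$4 = d"
  unfolding vector_def by simp_all

lemma inner6: "inner (x::real^6) y = x$1*y$1 + x$2*y$2 + x$3*y$3 + x$4*y$4 + x$5*y$5 + x$6*y$6"
  by (simp add: inner_vec_def sum_6)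
lemma inner4: "inner (x::real^4) y = x$1*y$1 + x$2*y$2 + x$3*y$3 + x$4*y$4"
  by (simp add: inner_vec_def sum_4)
lemma inner3: "inner (x::real^3) y = x$1*y$1 + x$2*y$2 + x$3*y$3"
  by (simp add: inner_vec_def sum_3)

lemma smooth_on_affine:
  fixes h :: "'a::euclidean_space \<Rightarrow> 'b::euclidean_space"
  assumes "linear h"
  shows "smooth_on U (\<lambda>x. h x + c)"
proof (rule smooth_on.coinduct[where X="\<lambda>g. \<exists>h c. linear h \<and> g = (\<lambda>x. h x + c)"])
  show "\<exists>h' c'. linear h' \<and> (\<lambda>x. h x + c) = (\<lambda>x. h' x + c')"
    by (rule exI[of _ h], rule exI[of _ c]) (simp add: assms)
next
  fix g :: "'a \<Rightarrow> 'b"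
  assume "\<exists>h c. linear h \<and> g = (\<lambda>x. h x + c)"
  then obtain h c where h: "linear h" and g: "g = (\<lambda>x. h x + c)" by blast
  have bl: "bounded_linear h" using h linear_conv_bounded_linear by blast
  have d: "(g has_derivative h) (at x)" for x
    unfolding g by (intro has_derivative_add_const bounded_linear.has_derivative[OF bl] has_derivative_ident)
  have fd: "frechet_derivative g (at x) = h" for x
    using frechet_derivative_at[OF d[of x]] by simp
  have dU: "g differentiable_on U"
    unfolding differentiable_on_def differentiable_def
  proof
    fix x assume "x \<in> U"
    show "\<exists>D. (g has_derivative D) (at x within U)"
      by (rule exI[of _ h]) (rule has_derivative_at_withinI[OF d])
  qed
  have ex: "\<exists>h' c'. linear h' \<and> (\<lambda>x. frechet_derivative g (at x) i) = (\<lambda>x. h' x + c')" for i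
  proof (rule exI[of _ "\<lambda>_. 0"], rule exI[of _ "h i"], rule conjI)
    show "linear (\<lambda>_. 0 :: 'b)" by (rule linear_zero)
    show "(\<lambda>x. frechet_derivative g (at x) i) = (\<lambda>x. 0 + h i)" by (simp only: fd add_0_left)
  qed
  show "\<exists>f. g = f \<and> f differentiable_on U \<and>
         (\<forall>x. x \<in> Basis \<longrightarrow>
              (\<exists>h c. linear h \<and> (\<lambda>xa. frechet_derivative f (at xa) x) = (\<lambda>x. h x + c)) \<or>
              smooth_on U (\<lambda>xa. frechet_derivative f (at xa) x))"
  proof (rule exI[of _ g], intro conjI allI impI)
    show "g = g" by (rule refl)
    show "g differentiable_on U" by (rule dU)
    fix i :: 'a
    show "(\<exists>h c. linear h \<and> (\<lambda>xa. frechet_derivative g (at xa) i) = (\<lambda>x. h x + c)) \<or>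
              smooth_on U (\<lambda>xa. frechet_derivative g (at xa) i)"
      using ex[of i] by (rule disjI1)
  qed
qed

lemma smooth_map_linear:
  fixes f :: "'a::euclidean_space \<Rightarrow> 'b::euclidean_space"
  assumes "linear f" shows "smooth_map X f"
  unfolding smooth_map_def
proof
  fix x assume "x \<in> X"
  have "smooth_on UNIV (\<lambda>x. f x + 0)" by (rule smooth_on_affine[OF assms])
  then have s: "smooth_on UNIV f" by simp
  show "\<exists>U F. open U \<and> x \<in> U \<and> smooth_on U F \<and> (\<forall>y\<in>U \<inter> X. F y = f y)"
    by (rule exI[of _ UNIV], rule exI[of _ f]) (simp add: s)
qed

lemma diffeo_linear:
  fixes f :: "'a::euclidean_space \<Rightarrow> 'b::euclidean_space"
  assumes "linear f" "linear g" "f ` X \<subseteq> Y" "g ` Y \<subseteq> X" "\<And>x. x \<in> X \<Longrightarrow> g (f x) = x"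
    "\<And>y. y \<in> Y \<Longrightarrow> f (g y) = y"
  shows "diffeomorphic_sets X Y"
  unfolding diffeomorphic_sets_def
  by (rule exI[of _ f], rule exI[of _ g]) (simp add: assms smooth_map_linear)


definition row1 :: "real^6 \<Rightarrow> real^4" where "row1 p = vector [0, p$1, p$2, p$3]"
definition row2 :: "real^6 \<Rightarrow> real^4" where "row2 p = vector [-p$1, 0, p$4, p$5]"
definition row3 :: "real^6 \<Rightarrow> real^4" where "row3 p = vector [-p$2, -p$4, 0, p$6]"
definition row4 :: "real^6 \<Rightarrow> real^4" where "row4 p = vector [-p$3, -p$5, -p$6, 0]"

lemmas rowdefs = vec6_eq pluecker_def row1_def row2_def row3_def row4_def ptolemy_P_def

lemma r12: "ptolemy_P p = 0 \<Longrightarrow> pluecker (row1 p) (row2 p) = p$1 *\<^sub>R p"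
  unfolding rowdefs by (auto simp: algebra_simps; linarith)
lemma r13: "ptolemy_P p = 0 \<Longrightarrow> pluecker (row1 p) (row3 p) = p$2 *\<^sub>R p"
  unfolding rowdefs by (auto simp: algebra_simps; linarith)
lemma r14: "ptolemy_P p = 0 \<Longrightarrow> pluecker (row1 p) (row4 p) = p$3 *\<^sub>R p"
  unfolding rowdefs by (auto simp: algebra_simps; linarith)
lemma r23: "ptolemy_P p = 0 \<Longrightarrow> pluecker (row2 p) (row3 p) = p$4 *\<^sub>R p"
  unfolding rowdefs by (auto simp: algebra_simps; linarith)
lemma r24: "ptolemy_P p = 0 \<Longrightarrow> pluecker (row2 p) (row4 p) = p$5 *\<^sub>R p"
  unfolding rowdefs by (auto simp: algebra_simps; linarith)
lemma r34: "ptolemy_P p = 0 \<Longrightarrow> pluecker (row3 p) (row4 p) = p$6 *\<^sub>R p"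
  unfolding rowdefs by (auto simp: algebra_simps; linarith)

lemma lagrange: "inner (pluecker a b) (pluecker a b) = inner a a * inner b b - (inner a b)^2"
  by (simp add: inner6 inner4 pluecker_def power2_eq_square algebra_simps)

lemma pl_scale: "pluecker (s *\<^sub>R a) (t *\<^sub>R b) = (s*t) *\<^sub>R pluecker a b"
  by (simp add: vec6_eq pluecker_def algebra_simps)

lemma pl_shear: "pluecker a (b - t *\<^sub>R a) = pluecker a b"
  by (simp add: vec6_eq pluecker_def algebra_simps)

lemma pl_zero: "pluecker 0 b = 0" "pluecker a 0 = 0"
  by (simp_all add: vec6_eq pluecker_def)

lemma pl_ptolemy: "ptolemy_P (pluecker a b) = 0"
  by (simp add: ptolemy_P_def pluecker_def algebra_simps)


lemma gs:
  assumes ab: "pluecker a b = c *\<^sub>R p" and c: "c \<noteq> 0" and pp: "inner p p = 1"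
  shows "p \<in> oriented_grassmannian_2_4"
proof -
  have p0: "p \<noteq> 0" using pp by auto
  have a0: "a \<noteq> 0" using ab c p0 pl_zero(1) by fastforce
  define w where "w = b - (inner a b / inner a a) *\<^sub>R a"
  have aa: "inner a a \<noteq> 0" using a0 by simp
  have aw: "inner a w = 0" using aa by (simp add: w_def inner_diff_right)
  have pw: "pluecker a w = c *\<^sub>R p" using pl_shear ab w_def by simp
  have w0: "w \<noteq> 0" using pw c p0 pl_zero(2) by fastforce
  have "c^2 = inner (pluecker a w) (pluecker a w)" using pw pp by (simp add: power2_eq_square)
  also have "\<dots> = inner a a * inner w w" by (simp add: lagrange aw)
  also have "\<dots> = (norm a * norm w)^2" by (simp add: power_mult_distrib power2_norm_eq_inner)
  finally have "\<bar>c\<bar> = norm a * norm w"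
    by (metis abs_of_nonneg norm_ge_zero power2_eq_iff_nonneg real_sqrt_abs zero_le_mult_iff abs_norm_cancel real_sqrt_unique)
  hence cn: "\<bar>c\<bar> = norm a * norm w" .
  define u where "u = (1 / norm a) *\<^sub>R a"
  define v where "v = (sgn c / norm w) *\<^sub>R w"
  have nu: "norm u = 1" using a0 by (simp add: u_def)
  have nv: "norm v = 1" using w0 c by (simp add: v_def abs_sgn)
  have uv: "inner u v = 0" by (simp add: u_def v_def aw)
  have "pluecker u v = ((1 / norm a) * (sgn c / norm w)) *\<^sub>R (c *\<^sub>R p)"
    by (simp add: u_def v_def pl_scale pw)
  also have "\<dots> = ((sgn c * c) / \<bar>c\<bar>) *\<^sub>R p" using cn by simp
  also have "\<dots> = p"
  proof -
    have "(sgn c * c) / \<bar>c\<bar> = 1" using c by (cases "c > 0") simp_all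
    then show ?thesis by (simp only: scaleR_one)
  qed
  finally show ?thesis unfolding oriented_grassmannian_2_4_def using nu nv uv by blast
qed

definition S6 :: "(real^6) set" where "S6 = {p. inner p p = 1 \<and> ptolemy_P p = 0}"

lemma grass_eq: "oriented_grassmannian_2_4 = S6"
proof
  show "oriented_grassmannian_2_4 \<subseteq> S6"
  proof
    fix p assume "p \<in> oriented_grassmannian_2_4"
    then obtain u v where p: "p = pluecker u v" and "norm u = 1" "norm v = 1" "inner u v = 0"
      unfolding oriented_grassmannian_2_4_def by blast
    then have "inner u u = 1" "inner v v = 1" by (simp_all add: norm_eq_1)
    then show "p \<in> S6" unfolding S6_def using p \<open>inner u v = 0\<close> by (simp add: lagrange pl_ptolemy)
  qed
next
  show "S6 \<subseteq> oriented_grassmannian_2_4"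
  proof
    fix p assume "p \<in> S6"
    then have pp: "inner p p = 1" and P: "ptolemy_P p = 0" by (auto simp: S6_def)
    have "p$1 \<noteq> 0 \<or> p$2 \<noteq> 0 \<or> p$3 \<noteq> 0 \<or> p$4 \<noteq> 0 \<or> p$5 \<noteq> 0 \<or> p$6 \<noteq> 0"
      using pp by (auto simp: inner6)
    then show "p \<in> oriented_grassmannian_2_4"
      using gs[OF r12[OF P] _ pp] gs[OF r13[OF P] _ pp] gs[OF r14[OF P] _ pp]
        gs[OF r23[OF P] _ pp] gs[OF r24[OF P] _ pp] gs[OF r34[OF P] _ pp] by blast
  qed
qed


definition Dk :: "real^6 \<Rightarrow> real^6 \<Rightarrow> real^6" where "Dk k r = (\<chi> i. k$i * r$i)"
definition Di :: "real^6 \<Rightarrow> real^6 \<Rightarrow> real^6" where "Di k r = (\<chi> i. r$i / k$i)"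

lemma linear_Dk: "linear (Dk k)"
  by (rule linearI) (simp_all add: Dk_def vec_eq_iff algebra_simps)
lemma linear_Di: "linear (Di k)"
  by (rule linearI) (simp_all add: Di_def vec_eq_iff algebra_simps add_divide_distrib)
lemma Dk_Di: "(\<And>i. k$i \<noteq> 0) \<Longrightarrow> Dk k (Di k r) = r"
  by (simp add: Dk_def Di_def vec_eq_iff)
lemma Di_Dk: "(\<And>i. k$i \<noteq> 0) \<Longrightarrow> Di k (Dk k r) = r"
  by (simp add: Dk_def Di_def vec_eq_iff)

definition Lm :: "real^6 \<Rightarrow> (real^3) \<times> (real^3)" where
  "Lm p = (vector [p$1+p$6, p$2-p$5, p$3+p$4], vector [p$1-p$6, p$2+p$5, p$3-p$4])"
definition Li :: "(real^3) \<times> (real^3) \<Rightarrow> real^6" where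
  "Li z = vector [(fst z$1 + snd z$1)/2, (fst z$2 + snd z$2)/2, (fst z$3 + snd z$3)/2,
                  (fst z$3 - snd z$3)/2, (snd z$2 - fst z$2)/2, (fst z$1 - snd z$1)/2]"

lemma linear_Lm: "linear Lm"
  by (rule linearI) (simp_all add: Lm_def vec3_eq algebra_simps)
lemma linear_Li: "linear Li"
  by (rule linearI) (simp_all add: Li_def vec6_eq algebra_simps add_divide_distrib diff_divide_distrib)
lemma Lm_Li: "Lm (Li z) = z"
  by (simp add: Lm_def Li_def prod_eq_iff vec3_eq) (simp add: field_simps)
lemma Li_Lm: "Li (Lm p) = p"
  by (simp add: Lm_def Li_def vec6_eq)

lemma Lm_fst: "inner (fst (Lm p)) (fst (Lm p)) = inner p p + 2 * ptolemy_P p"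
  by (simp add: Lm_def inner3 inner6 ptolemy_P_def power2_eq_square algebra_simps)
lemma Lm_snd: "inner (snd (Lm p)) (snd (Lm p)) = inner p p - 2 * ptolemy_P p"
  by (simp add: Lm_def inner3 inner6 ptolemy_P_def power2_eq_square algebra_simps)
lemma Li_inner: "inner (Li z) (Li z) = (inner (fst z) (fst z) + inner (snd z) (snd z)) / 2"
  by (simp add: Li_def inner3 inner6 power2_eq_square field_simps)
lemma Li_P: "ptolemy_P (Li z) = (inner (fst z) (fst z) - inner (snd z) (snd z)) / 4"
  by (simp add: Li_def inner3 ptolemy_P_def power2_eq_square field_simps)

lemma S22: "z \<in> sphere2_times_sphere2 \<longleftrightarrow> inner (fst z) (fst z) = 1 \<and> inner (snd z) (snd z) = 1"
  by (cases z) (simp add: sphere2_times_sphere2_def norm_eq_1)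

lemma S6_S22: "Lm ` S6 \<subseteq> sphere2_times_sphere2" "Li ` sphere2_times_sphere2 \<subseteq> S6"
  by (auto simp: S22 S6_def Lm_fst Lm_snd Li_inner Li_P)


definition kv :: "real \<Rightarrow> real \<Rightarrow> real \<Rightarrow> real \<Rightarrow> real^6" where
  "kv m1 m2 m3 m4 = vector [sqrt(m1*m2/(2*(m1+m2+m3+m4))), sqrt(m1*m3/(2*(m1+m2+m3+m4))),
     sqrt(m1*m4/(2*(m1+m2+m3+m4))), sqrt(m2*m3/(2*(m1+m2+m3+m4))),
     sqrt(m2*m4/(2*(m1+m2+m3+m4))), sqrt(m3*m4/(2*(m1+m2+m3+m4)))]"

lemma sq_sqrt: "(x::real) \<ge> 0 \<Longrightarrow> sqrt x * sqrt x = x"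
  by simp

lemma kv_props:
  fixes m1 m2 m3 m4 :: real
  assumes "m1 > 0" "m2 > 0" "m3 > 0" "m4 > 0"
  defines "k \<equiv> kv m1 m2 m3 m4"
  shows "\<And>i. k$i \<noteq> 0"
    and "inner (Dk k r) (Dk k r) = moment_I m1 m2 m3 m4 r"
    and "\<exists>K>0. \<forall>r. ptolemy_P (Dk k r) = K * ptolemy_P r"
proof -
  define M where "M = m1+m2+m3+m4"
  have M: "M > 0" using assms by (simp add: M_def)
  have k: "k$1 = sqrt(m1*m2/(2*M))" "k$2 = sqrt(m1*m3/(2*M))" "k$3 = sqrt(m1*m4/(2*M))"
    "k$4 = sqrt(m2*m3/(2*M))" "k$5 = sqrt(m2*m4/(2*M))" "k$6 = sqrt(m3*m4/(2*M))"
    by (simp_all add: k_def kv_def M_def)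
  have pos: "k$1 > 0" "k$2 > 0" "k$3 > 0" "k$4 > 0" "k$5 > 0" "k$6 > 0"
    unfolding k using assms M by simp_all
  show "\<And>i. k$i \<noteq> 0"
    by (metis pos exhaust_6 less_irrefl)
  have sq: "k$1 * k$1 = m1*m2/(2*M)" "k$2 * k$2 = m1*m3/(2*M)" "k$3 * k$3 = m1*m4/(2*M)"
    "k$4 * k$4 = m2*m3/(2*M)" "k$5 * k$5 = m2*m4/(2*M)" "k$6 * k$6 = m3*m4/(2*M)"
    unfolding k using assms M by (simp_all add: sq_sqrt)
  have "inner (Dk k r) (Dk k r) = (k$1*k$1)*(r$1)^2 + (k$2*k$2)*(r$2)^2 + (k$3*k$3)*(r$3)^2
      + (k$4*k$4)*(r$4)^2 + (k$5*k$5)*(r$5)^2 + (k$6*k$6)*(r$6)^2"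
    by (simp add: Dk_def inner6 power2_eq_square algebra_simps)
  also have "\<dots> = moment_I m1 m2 m3 m4 r"
    unfolding sq moment_I_def M_def[symmetric] using M by (simp add: field_simps)
  finally show "inner (Dk k r) (Dk k r) = moment_I m1 m2 m3 m4 r" .
  define K where "K = sqrt (m1*m2*m3*m4/(2*M)^2)"
  have Kp: "K > 0" using assms M by (simp add: K_def)
  have e1: "k$1 * k$6 = K" unfolding k K_def real_sqrt_mult[symmetric] using M
    by (simp add: field_simps power2_eq_square)
  have e2: "k$3 * k$4 = K" unfolding k K_def real_sqrt_mult[symmetric] using M
    by (simp add: field_simps power2_eq_square)
  have e3: "k$2 * k$5 = K" unfolding k K_def real_sqrt_mult[symmetric] using M
    by (simp add: field_simps power2_eq_square)
  have "ptolemy_P (Dk k r) = K * ptolemy_P r" for r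
  proof -
    have "ptolemy_P (Dk k r) = (k$1*k$6) * (r$1*r$6) + (k$3*k$4)*(r$3*r$4) - (k$2*k$5)*(r$2*r$5)"
      by (simp add: Dk_def ptolemy_P_def algebra_simps)
    then show ?thesis unfolding e1 e2 e3 ptolemy_P_def by (simp add: algebra_simps)
  qed
  then show "\<exists>K>0. \<forall>r. ptolemy_P (Dk k r) = K * ptolemy_P r" using Kp by blast
qed

theorem lemma4:
  fixes m1 m2 m3 m4 :: real
  assumes "m1 > 0" "m2 > 0" "m3 > 0" "m4 > 0"
  shows "diffeomorphic_sets (shape_M m1 m2 m3 m4) oriented_grassmannian_2_4
       \<and> diffeomorphic_sets (shape_M m1 m2 m3 m4) sphere2_times_sphere2"
proof -
  define k where "k = kv m1 m2 m3 m4"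
  note kp = kv_props[OF assms, folded k_def]
  obtain K where K: "K > 0" "\<And>r. ptolemy_P (Dk k r) = K * ptolemy_P r" using kp(3) by blast
  have inv1: "Di k (Dk k r) = r" "Dk k (Di k r) = r" for r using Di_Dk Dk_Di kp(1) by auto
  have MS: "Dk k ` shape_M m1 m2 m3 m4 \<subseteq> S6"
    by (auto simp: shape_M_def S6_def kp(2) K)
  have SM: "Di k ` S6 \<subseteq> shape_M m1 m2 m3 m4"
  proof
    fix r assume "r \<in> Di k ` S6"
    then obtain p where p: "p \<in> S6" "r = Di k p" by blast
    have "inner (Dk k r) (Dk k r) = 1" "ptolemy_P (Dk k r) = 0" using p inv1 by (auto simp: S6_def)
    then show "r \<in> shape_M m1 m2 m3 m4" using K(1) by (auto simp: shape_M_def kp(2) K(2))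
  qed
  have d1: "diffeomorphic_sets (shape_M m1 m2 m3 m4) oriented_grassmannian_2_4"
    unfolding grass_eq
    by (rule diffeo_linear[OF linear_Dk linear_Di MS SM]) (simp_all add: inv1)
  have d2: "diffeomorphic_sets (shape_M m1 m2 m3 m4) sphere2_times_sphere2"
  proof (rule diffeo_linear[of "Lm \<circ> Dk k" "Di k \<circ> Li"])
    show "linear (Lm \<circ> Dk k)" by (rule linear_compose[OF linear_Dk linear_Lm])
    show "linear (Di k \<circ> Li)" by (rule linear_compose[OF linear_Li linear_Di])
    show "(Lm \<circ> Dk k) ` shape_M m1 m2 m3 m4 \<subseteq> sphere2_times_sphere2"
      using MS S6_S22(1) by (auto simp: image_comp[symmetric])
    show "(Di k \<circ> Li) ` sphere2_times_sphere2 \<subseteq> shape_M m1 m2 m3 m4"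
      using SM S6_S22(2) by (auto simp: image_comp[symmetric])
  qed (simp_all add: inv1 Lm_Li Li_Lm)
  show ?thesis using d1 d2 by blast
qed

end
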